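(* Let $\ell\in\mathbb{Z}^2$ and define the event $\Sigma=\{\mathrm{An}(\ell)\cap\mathrm{An}(0)\neq\emptyset\}\cup\{\mathrm{De}(\ell)\cap\mathrm{De}(0)\neq\emptyset\}$. Then for every $0\le p\le 1$, $$P_p\big(\mathrm{An}(\ell)\cap\mathrm{An}(0)\neq\emptyset\big)\ \ge\ 1-\big(1-P_p(\Sigma)\big)^{1/2}.$$
   Context: Oriented square lattice: node set $\mathbb{Z}^2$, with a directed edge $u\to v$ if and only if $v-u\in\{(1,0),(0,1)\}$; $E(\mathbb{Z}^2)$ denotes this edge set. Bernoulli bond percolation with parameter $p\in[0,1]$: each edge of $E(\mathbb{Z}^2)$ is independently declared open with probability $p$ and closed otherwise; $P_p$ is the resulting product measure on $\Omega=\{0,1\}^{E(\mathbb{Z}^2)}$. In a configuration, $\mathrm{An}(u)$ is the set consisting of $u$ and all nodes $v$ from which there is a directed path $v\to\cdots\to u$ consisting of open edges traversed in their orientation; $\mathrm{De}(u)$ is the set consisting of $u$ and all nodes $v$ reachable from $u$ by such a directed open path. *)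

theory Defs
  imports "HOL-Probability.Probability"
begin

type_synonym node = "int \<times> int"
type_synonym edge = "node \<times> node"

definition Edges :: "edge set" where
  "Edges = {(u, v). v = (fst u + 1, snd u) \<or> v = (fst u, snd u + 1)}"

text \<open>Bernoulli bond percolation: product of Bernoulli(p) over the edge set;
  a configuration is omega :: edge => bool (True = open).\<close>
definition perc :: "real \<Rightarrow> (edge \<Rightarrow> bool) measure" where
  "perc p = PiM Edges (\<lambda>_. measure_pmf (bernoulli_pmf p))"

definition open_step :: "(edge \<Rightarrow> bool) \<Rightarrow> node \<Rightarrow> node \<Rightarrow> bool" where
  "open_step \<omega> u v \<longleftrightarrow> (u, v) \<in> Edges \<and> \<omega> (u, v)"

definition An :: "(edge \<Rightarrow> bool) \<Rightarrow> node \<Rightarrow> node set" where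
  "An \<omega> u = {v. (open_step \<omega>)\<^sup>*\<^sup>* v u}"

definition De :: "(edge \<Rightarrow> bool) \<Rightarrow> node \<Rightarrow> node set" where
  "De \<omega> u = {v. (open_step \<omega>)\<^sup>*\<^sup>* u v}"

end

theory Submission
  imports Defs
begin


definition cut :: "edge set \<Rightarrow> (edge \<Rightarrow> bool) \<Rightarrow> (edge \<Rightarrow> bool)" where
  "cut F \<omega> = (\<lambda>e. e \<in> F \<and> \<omega> e)"

lemma open_step_mono: "\<omega> \<le> \<omega>' \<Longrightarrow> open_step \<omega> u v \<Longrightarrow> open_step \<omega>' u v"
  by (metis le_boolD le_funD open_step_def)

lemma rtranclp_open_mono:
  assumes "\<omega> \<le> \<omega>'" shows "(open_step \<omega>)\<^sup>*\<^sup>* u v \<Longrightarrow> (open_step \<omega>')\<^sup>*\<^sup>* u v"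
  by (induction rule: rtranclp_induct) (auto intro: rtranclp.rtrancl_into_rtrancl open_step_mono[OF assms])

lemma An_mono: "\<omega> \<le> \<omega>' \<Longrightarrow> An \<omega> u \<subseteq> An \<omega>' u"
  unfolding An_def using rtranclp_open_mono by blast

lemma De_mono: "\<omega> \<le> \<omega>' \<Longrightarrow> De \<omega> u \<subseteq> De \<omega>' u"
  unfolding De_def using rtranclp_open_mono by blast

lemma cut_le: "cut F \<omega> \<le> \<omega>"
  by (auto simp: cut_def le_fun_def)

lemma cut_mono: "F \<subseteq> G \<Longrightarrow> cut F \<omega> \<le> cut G \<omega>"
  by (auto simp: cut_def le_fun_def)

lemma cut_mono2: "\<omega> \<le> \<omega>' \<Longrightarrow> cut F \<omega> \<le> cut F \<omega>'"
  by (auto simp: cut_def le_fun_def)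

lemma rtranclp_open_cut:
  fixes Fs :: "nat \<Rightarrow> edge set"
  assumes mono: "mono Fs" and cov: "\<And>e. e \<in> Edges \<Longrightarrow> \<exists>n. e \<in> Fs n"
  shows "(open_step \<omega>)\<^sup>*\<^sup>* u v \<Longrightarrow> \<exists>N. \<forall>n\<ge>N. (open_step (cut (Fs n) \<omega>))\<^sup>*\<^sup>* u v"
proof (induction rule: rtranclp_induct)
  case base
  then show ?case by auto
next
  case (step y z)
  then obtain N where N: "\<forall>n\<ge>N. (open_step (cut (Fs n) \<omega>))\<^sup>*\<^sup>* u y" by blast
  from step(2) have e: "(y,z) \<in> Edges" "\<omega> (y,z)" by (auto simp: open_step_def)
  obtain M where M: "(y,z) \<in> Fs M" using cov e by blast
  show ?case
  proof (intro exI[of _ "max N M"] allI impI)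
    fix n assume n: "max N M \<le> n"
    have "M \<le> n" using n by simp
    hence "Fs M \<subseteq> Fs n" using mono by (simp add: monoD)
    hence "(y,z) \<in> Fs n" using M by blast
    hence "open_step (cut (Fs n) \<omega>) y z" using e by (auto simp: open_step_def cut_def)
    thus "(open_step (cut (Fs n) \<omega>))\<^sup>*\<^sup>* u z" using N n
      by (meson max.boundedE rtranclp.rtrancl_into_rtrancl)
  qed
qed



lemma prob_Pi_insert:
  fixes U :: "('a \<Rightarrow> bool) set"
  assumes "finite F" "a \<notin> F" "0 \<le> p" "p \<le> 1"
  shows "measure_pmf.prob (Pi_pmf (insert a F) False (\<lambda>_. bernoulli_pmf p)) U =
    p * measure_pmf.prob (Pi_pmf F False (\<lambda>_. bernoulli_pmf p)) {f. f(a:=True) \<in> U}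
    + (1-p) * measure_pmf.prob (Pi_pmf F False (\<lambda>_. bernoulli_pmf p)) {f. f(a:=False) \<in> U}"
proof -
  let ?Q = "Pi_pmf F False (\<lambda>_. bernoulli_pmf p)"
  have eq: "Pi_pmf (insert a F) False (\<lambda>_. bernoulli_pmf p) =
      bind_pmf (bernoulli_pmf p) (\<lambda>y. map_pmf (\<lambda>f. f(a:=y)) ?Q)"
    using assms by (simp add: Pi_pmf_insert' map_pmf_def)
  define h where "h y = measure_pmf.prob ?Q {f. f(a:=y) \<in> U}" for y
  have h0: "0 \<le> h y" for y by (simp add: h_def)
  have "emeasure (measure_pmf (Pi_pmf (insert a F) False (\<lambda>_. bernoulli_pmf p))) U =
      (\<integral>\<^sup>+y. ennreal (h y) \<partial>bernoulli_pmf p)"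
    unfolding eq emeasure_bind_pmf
    by (intro nn_integral_cong) (simp add: measure_pmf.emeasure_eq_measure h_def vimage_def)
  also have "\<dots> = ennreal (h True) * ennreal p + ennreal (h False) * ennreal (1-p)"
    using assms by simp
  also have "\<dots> = ennreal (p * h True + (1-p) * h False)"
    using assms h0 by (simp add: ennreal_mult[symmetric] ennreal_plus mult.commute)
  finally have E: "ennreal (measure_pmf.prob (Pi_pmf (insert a F) False (\<lambda>_. bernoulli_pmf p)) U)
     = ennreal (p * h True + (1-p) * h False)"
    by (simp add: measure_pmf.emeasure_eq_measure)
  have nn: "0 \<le> p * h True + (1-p) * h False" using assms h0 by simp
  have "measure_pmf.prob (Pi_pmf (insert a F) False (\<lambda>_. bernoulli_pmf p)) U = p * h True + (1-p) * h False"
    using E nn by (simp only: ennreal_inj[OF measure_nonneg nn])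
  then show ?thesis by (simp add: h_def)
qed

lemma harris_Pi_pmf:
  fixes U V :: "('a \<Rightarrow> bool) set"
  assumes "finite F" "0 \<le> p" "p \<le> 1"
    and "\<And>x y. x \<in> U \<Longrightarrow> x \<le> y \<Longrightarrow> y \<in> U"
    and "\<And>x y. x \<in> V \<Longrightarrow> x \<le> y \<Longrightarrow> y \<in> V"
  shows "measure_pmf.prob (Pi_pmf F False (\<lambda>_. bernoulli_pmf p)) U *
         measure_pmf.prob (Pi_pmf F False (\<lambda>_. bernoulli_pmf p)) V
       \<le> measure_pmf.prob (Pi_pmf F False (\<lambda>_. bernoulli_pmf p)) (U \<inter> V)"
  using assms(1,4,5)
proof (induction F arbitrary: U V rule: finite_induct)
  case empty
  then show ?case by (simp add: indicator_def)
next
  case (insert a F)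
  let ?Q = "Pi_pmf F False (\<lambda>_. bernoulli_pmf p)"
  define Uy where "Uy y = {f. f(a:=y) \<in> U}" for y
  define Vy where "Vy y = {f. f(a:=y) \<in> V}" for y
  have upd_le: "f(a:=y) \<le> g(a:=y)" if "f \<le> g" for f g :: "'a \<Rightarrow> bool" and y
    using that by (auto simp: le_fun_def)
  have IH: "measure_pmf.prob ?Q (Uy y) * measure_pmf.prob ?Q (Vy y) \<le> measure_pmf.prob ?Q (Uy y \<inter> Vy y)" for y
    by (rule insert.IH) (auto simp: Uy_def Vy_def, metis insert.prems(1) upd_le, metis insert.prems(2) upd_le)
  have UVy: "{f. f(a:=y) \<in> U \<inter> V} = Uy y \<inter> Vy y" for y by (auto simp: Uy_def Vy_def)
  have le_TF: "f(a:=False) \<le> f(a:=True)" for f :: "'a \<Rightarrow> bool" by (auto simp: le_fun_def)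
  have monoU: "measure_pmf.prob ?Q (Uy False) \<le> measure_pmf.prob ?Q (Uy True)"
    by (intro measure_pmf.finite_measure_mono) (auto simp: Uy_def intro: insert.prems le_TF)
  have monoV: "measure_pmf.prob ?Q (Vy False) \<le> measure_pmf.prob ?Q (Vy True)"
    by (intro measure_pmf.finite_measure_mono) (auto simp: Vy_def intro: insert.prems le_TF)
  define u1 where "u1 = measure_pmf.prob ?Q (Uy True)"
  define u0 where "u0 = measure_pmf.prob ?Q (Uy False)"
  define v1 where "v1 = measure_pmf.prob ?Q (Vy True)"
  define v0 where "v0 = measure_pmf.prob ?Q (Vy False)"
  define w1 where "w1 = measure_pmf.prob ?Q (Uy True \<inter> Vy True)"
  define w0 where "w0 = measure_pmf.prob ?Q (Uy False \<inter> Vy False)"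
  have PU: "measure_pmf.prob (Pi_pmf (insert a F) False (\<lambda>_. bernoulli_pmf p)) U = p* u1 + (1-p)* u0"
    using insert assms by (simp add: prob_Pi_insert u1_def u0_def Uy_def)
  have PV: "measure_pmf.prob (Pi_pmf (insert a F) False (\<lambda>_. bernoulli_pmf p)) V = p* v1 + (1-p)* v0"
    using insert assms by (simp add: prob_Pi_insert v1_def v0_def Vy_def)
  have PUV: "measure_pmf.prob (Pi_pmf (insert a F) False (\<lambda>_. bernoulli_pmf p)) (U \<inter> V) = p* w1 + (1-p)* w0"
    using insert assms by (simp add: prob_Pi_insert w1_def w0_def UVy del: Int_iff)
  have id: "(p* u1+(1-p)* u0)*(p* v1+(1-p)* v0) = p*(u1* v1) + (1-p)*(u0* v0) - p*(1-p)*((u1-u0)*(v1-v0))"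
    by algebra
  have c: "0 \<le> p*(1-p)*((u1-u0)*(v1-v0))"
    using assms monoU monoV u1_def u0_def v1_def v0_def by simp
  have d1: "p*(u1* v1) \<le> p* w1" using IH[of True] assms by (simp add: mult_left_mono u1_def v1_def w1_def)
  have d0: "(1-p)*(u0* v0) \<le> (1-p)* w0" using IH[of False] assms by (simp add: mult_left_mono u0_def v0_def w0_def)
  show ?case unfolding PU PV PUV id using c d1 d0 by linarith
qed



lemma prob_space_perc: "prob_space (perc p)"
  unfolding perc_def by (intro prob_space_PiM) (simp add: measure_pmf.prob_space_axioms)

lemma space_perc: "space (perc p) = PiE Edges (\<lambda>_. UNIV)"
  unfolding perc_def by (simp add: space_PiM)

lemma perc_cut:
  assumes F: "finite F" "F \<subseteq> Edges" and p: "0 \<le> p" "p \<le> 1"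
  shows "{\<omega>\<in>space (perc p). Q (cut F \<omega>)} \<in> sets (perc p)"
    and "measure (perc p) {\<omega>\<in>space (perc p). Q (cut F \<omega>)}
          = measure_pmf.prob (Pi_pmf F False (\<lambda>_. bernoulli_pmf p)) {x. Q x}"
proof -
  interpret P: prob_space "perc p" by (rule prob_space_perc)
  let ?M = "\<lambda>_::edge. measure_pmf (bernoulli_pmf p)"
  let ?Q = "Pi_pmf F False (\<lambda>_. bernoulli_pmf p)"
  define S where "S = PiE_dflt F False (\<lambda>_. UNIV) \<inter> {x. Q x}"
  define C where "C x = prod_emb Edges ?M F (PiE F (\<lambda>e. {x e}))" for x
  have finS: "finite S" unfolding S_def using F(1) by (intro finite_Int disjI1 finite_PiE_dflt) auto
  have CS: "C x \<in> sets (perc p)" for x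
    unfolding C_def perc_def by (intro sets_PiM_I F) auto
  have Cmem: "\<omega> e = x e" if "\<omega> \<in> C x" "e \<in> F" for \<omega> x e
  proof -
    have "restrict \<omega> F \<in> PiE F (\<lambda>e. {x e})" using that(1) by (simp add: C_def prod_emb_iff)
    from PiE_mem[OF this that(2)] show ?thesis using that(2) by simp
  qed
  have eq: "{\<omega>\<in>space (perc p). Q (cut F \<omega>)} = (\<Union>x\<in>S. C x)"
  proof (intro equalityI subsetI)
    fix \<omega> assume w: "\<omega> \<in> {\<omega>\<in>space (perc p). Q (cut F \<omega>)}"
    have "cut F \<omega> \<in> S" using w by (auto simp: S_def PiE_dflt_def cut_def)
    moreover have "\<omega> \<in> C (cut F \<omega>)"
      using w by (auto simp: C_def prod_emb_iff space_perc cut_def PiE_def)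
    ultimately show "\<omega> \<in> (\<Union>x\<in>S. C x)" by blast
  next
    fix \<omega> assume "\<omega> \<in> (\<Union>x\<in>S. C x)"
    then obtain x where x: "x \<in> S" "\<omega> \<in> C x" by blast
    have "cut F \<omega> = x"
    proof
      fix e show "cut F \<omega> e = x e"
      proof (cases "e \<in> F")
        case True then show ?thesis using Cmem[OF x(2), of e] by (simp add: cut_def)
      next
        case False
        have "x e = False" using x(1) False unfolding S_def PiE_dflt_def by blast
        then show ?thesis using False by (simp add: cut_def)
      qed
    qed
    then show "\<omega> \<in> {\<omega>\<in>space (perc p). Q (cut F \<omega>)}"
      using x CS[of x] sets.sets_into_space by (auto simp: S_def)
  qed
  show "{\<omega>\<in>space (perc p). Q (cut F \<omega>)} \<in> sets (perc p)"
    unfolding eq using finS CS by auto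
  have disj: "disjoint_family_on C S"
  proof (unfold disjoint_family_on_def, intro ballI impI)
    fix x y assume xy: "x \<in> S" "y \<in> S" "x \<noteq> y"
    then obtain e where e: "x e \<noteq> y e" by blast
    then have "e \<in> F" using xy(1,2) unfolding S_def PiE_dflt_def by blast
    show "C x \<inter> C y = {}"
    proof (rule ccontr)
      assume "C x \<inter> C y \<noteq> {}"
      then obtain \<omega> where w: "\<omega> \<in> C x" "\<omega> \<in> C y" by blast
      show False using Cmem[OF w(1) \<open>e \<in> F\<close>] Cmem[OF w(2) \<open>e \<in> F\<close>] e by simp
    qed
  qed
  have mC: "measure (perc p) (C x) = pmf ?Q x" if "x \<in> S" for x
  proof -
    have "emeasure (perc p) (C x) = (\<Prod>e\<in>F. emeasure (?M e) {x e})"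
      unfolding perc_def C_def
      by (intro emeasure_PiM_emb F) (auto simp: measure_pmf.prob_space_axioms)
    also have "\<dots> = (\<Prod>e\<in>F. ennreal (pmf (bernoulli_pmf p) (x e)))"
      by (simp add: emeasure_pmf_single)
    also have "\<dots> = ennreal (\<Prod>e\<in>F. pmf (bernoulli_pmf p) (x e))"
      by (simp add: prod_ennreal)
    finally have "measure (perc p) (C x) = (\<Prod>e\<in>F. pmf (bernoulli_pmf p) (x e))"
      by (simp add: P.emeasure_eq_measure prod_nonneg)
    also have "\<dots> = pmf ?Q x"
      using that F by (subst pmf_Pi') (auto simp: S_def PiE_dflt_def)
    finally show ?thesis .
  qed
  have "measure (perc p) {\<omega>\<in>space (perc p). Q (cut F \<omega>)} = (\<Sum>x\<in>S. measure (perc p) (C x))"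
    unfolding eq using finS CS disj by (intro measure_finite_Union) auto
  also have "\<dots> = (\<Sum>x\<in>S. pmf ?Q x)" using mC by simp
  also have "\<dots> = measure_pmf.prob ?Q S" using finS by (simp add: measure_measure_pmf_finite)
  also have "\<dots> = measure_pmf.prob ?Q (S \<inter> set_pmf ?Q)" by (simp add: measure_Int_set_pmf)
  also have "S \<inter> set_pmf ?Q = {x. Q x} \<inter> set_pmf ?Q"
    using set_Pi_pmf_subset'[OF F(1), of False "\<lambda>_. bernoulli_pmf p"]
    by (auto simp: S_def PiE_dflt_def)
  also have "measure_pmf.prob ?Q \<dots> = measure_pmf.prob ?Q {x. Q x}" by (simp add: measure_Int_set_pmf)
  finally show "measure (perc p) {\<omega>\<in>space (perc p). Q (cut F \<omega>)}
          = measure_pmf.prob ?Q {x. Q x}" .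
qed



definition rf :: "node \<Rightarrow> node \<Rightarrow> node" where
  "rf l u = (fst l - fst u, snd l - snd u)"

definition Rf :: "node \<Rightarrow> edge \<Rightarrow> edge" where
  "Rf l e = (rf l (snd e), rf l (fst e))"

definition Bx :: "node \<Rightarrow> nat \<Rightarrow> node set" where
  "Bx l n = {u. \<bar>2 * fst u - fst l\<bar> \<le> 2 * int n \<and> \<bar>2 * snd u - snd l\<bar> \<le> 2 * int n}"

definition Fb :: "node \<Rightarrow> nat \<Rightarrow> edge set" where
  "Fb l n = {e \<in> Edges. fst e \<in> Bx l n \<and> snd e \<in> Bx l n}"

lemma rf_rf[simp]: "rf l (rf l u) = u" by (simp add: rf_def)
lemma Rf_Rf[simp]: "Rf l (Rf l e) = e" by (simp add: Rf_def)

lemma Edges_Rf: "(a, b) \<in> Edges \<longleftrightarrow> (rf l b, rf l a) \<in> Edges"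
  by (cases a, cases b) (auto simp: Edges_def rf_def)

lemma rf_Bx: "u \<in> Bx l n \<Longrightarrow> rf l u \<in> Bx l n"
  by (auto simp: Bx_def rf_def abs_minus_commute)

lemma Rf_Fb: "e \<in> Fb l n \<Longrightarrow> Rf l e \<in> Fb l n"
  using Edges_Rf[of "fst e" "snd e" l] rf_Bx by (auto simp: Fb_def Rf_def)

lemma Bx_finite: "finite (Bx l n)"
proof -
  define N where "N = int n + \<bar>fst l\<bar> + \<bar>snd l\<bar>"
  have "Bx l n \<subseteq> {-N..N} \<times> {-N..N}"
    by (auto simp: Bx_def N_def)
  then show ?thesis by (rule finite_subset) simp
qed

lemma Fb_finite: "finite (Fb l n)"
proof -
  have "Fb l n \<subseteq> Bx l n \<times> Bx l n" by (auto simp: Fb_def)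
  then show ?thesis using Bx_finite by (meson finite_SigmaI finite_subset)
qed

lemma Fb_Edges: "Fb l n \<subseteq> Edges" by (auto simp: Fb_def)

lemma Fb_mono: "mono (Fb l)"
  by (rule monoI) (auto simp: Fb_def Bx_def)

lemma Fb_cover: "e \<in> Edges \<Longrightarrow> \<exists>n. e \<in> Fb l n"
proof -
  assume e: "e \<in> Edges"
  obtain u v where uv: "e = (u, v)" by (metis surj_pair)
  define n where "n = nat (\<bar>2 * fst u - fst l\<bar> + \<bar>2 * snd u - snd l\<bar> + \<bar>2 * fst v - fst l\<bar> + \<bar>2 * snd v - snd l\<bar>)"
  have "e \<in> Fb l n" using e unfolding uv Fb_def Bx_def n_def by auto
  then show ?thesis by blast
qed

lemma Fb_bij: "bij_betw (Rf l) (Fb l n) (Fb l n)"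
  by (rule bij_betw_byWitness[where f'="Rf l"]) (auto intro: Rf_Fb)

lemma rtranclp_flip:
  assumes "\<And>x y. P x y \<Longrightarrow> Q (f y) (f x)"
  shows "P\<^sup>*\<^sup>* a b \<Longrightarrow> Q\<^sup>*\<^sup>* (f b) (f a)"
  by (induction rule: rtranclp_induct) (auto intro: converse_rtranclp_into_rtranclp assms)

lemma open_step_Rf: "open_step (\<omega> \<circ> Rf l) a b \<longleftrightarrow> open_step \<omega> (rf l b) (rf l a)"
  using Edges_Rf[of a b l] by (auto simp: open_step_def Rf_def)

lemma rtranclp_Rf: "(open_step (\<omega> \<circ> Rf l))\<^sup>*\<^sup>* a b \<longleftrightarrow> (open_step \<omega>)\<^sup>*\<^sup>* (rf l b) (rf l a)"
proof
  assume "(open_step (\<omega> \<circ> Rf l))\<^sup>*\<^sup>* a b"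
  then show "(open_step \<omega>)\<^sup>*\<^sup>* (rf l b) (rf l a)"
    by (rule rtranclp_flip[rotated]) (simp add: open_step_Rf)
next
  assume "(open_step \<omega>)\<^sup>*\<^sup>* (rf l b) (rf l a)"
  then have "(open_step (\<omega> \<circ> Rf l))\<^sup>*\<^sup>* (rf l (rf l a)) (rf l (rf l b))"
    by (rule rtranclp_flip[rotated]) (simp add: open_step_Rf)
  then show "(open_step (\<omega> \<circ> Rf l))\<^sup>*\<^sup>* a b" by simp
qed

lemma Aev_Rf:
  "(An (\<omega> \<circ> Rf l) l \<inter> An (\<omega> \<circ> Rf l) (0,0) \<noteq> {}) \<longleftrightarrow> (De \<omega> l \<inter> De \<omega> (0,0) \<noteq> {})"
proof
  assume "An (\<omega> \<circ> Rf l) l \<inter> An (\<omega> \<circ> Rf l) (0,0) \<noteq> {}"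
  then obtain v where "(open_step (\<omega> \<circ> Rf l))\<^sup>*\<^sup>* v l" "(open_step (\<omega> \<circ> Rf l))\<^sup>*\<^sup>* v (0,0)"
    by (auto simp: An_def)
  then have "(open_step \<omega>)\<^sup>*\<^sup>* (rf l l) (rf l v)" "(open_step \<omega>)\<^sup>*\<^sup>* (rf l (0,0)) (rf l v)"
    by (simp_all add: rtranclp_Rf)
  moreover have "rf l l = (0,0)" "rf l (0,0) = l" by (simp_all add: rf_def)
  ultimately show "De \<omega> l \<inter> De \<omega> (0,0) \<noteq> {}" by (auto simp: De_def)
next
  assume "De \<omega> l \<inter> De \<omega> (0,0) \<noteq> {}"
  then obtain w where w: "(open_step \<omega>)\<^sup>*\<^sup>* l w" "(open_step \<omega>)\<^sup>*\<^sup>* (0,0) w"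
    by (auto simp: De_def)
  have "rf l l = (0,0)" "rf l (0,0) = l" by (simp_all add: rf_def)
  then have "(open_step (\<omega> \<circ> Rf l))\<^sup>*\<^sup>* (rf l w) l" "(open_step (\<omega> \<circ> Rf l))\<^sup>*\<^sup>* (rf l w) (0,0)"
    using w by (simp_all add: rtranclp_Rf)
  then show "An (\<omega> \<circ> Rf l) l \<inter> An (\<omega> \<circ> Rf l) (0,0) \<noteq> {}" by (auto simp: An_def)
qed

lemma sym_prob:
  "measure_pmf.prob (Pi_pmf (Fb l n) False (\<lambda>_. bernoulli_pmf p)) {x. An x l \<inter> An x (0,0) \<noteq> {}}
 = measure_pmf.prob (Pi_pmf (Fb l n) False (\<lambda>_. bernoulli_pmf p)) {x. De x l \<inter> De x (0,0) \<noteq> {}}"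
proof -
  have out: "Rf l x \<notin> Fb l n" if "x \<notin> Fb l n" for x
    using that Rf_Fb[of "Rf l x" l n] by auto
  have eq: "Pi_pmf (Fb l n) False (\<lambda>_. bernoulli_pmf p)
      = map_pmf (\<lambda>g. g \<circ> Rf l) (Pi_pmf (Fb l n) False (\<lambda>_. bernoulli_pmf p))"
    by (rule Pi_pmf_bij_betw[OF Fb_finite Fb_bij out])
  show ?thesis
    by (subst eq) (simp add: vimage_def Aev_Rf)
qed



lemma An_cut_ev:
  assumes "An \<omega> l \<inter> An \<omega> (0,0) \<noteq> {}"
  shows "\<exists>N. \<forall>n\<ge>N. An (cut (Fb l n) \<omega>) l \<inter> An (cut (Fb l n) \<omega>) (0,0) \<noteq> {}"
proof -
  obtain v where v: "(open_step \<omega>)\<^sup>*\<^sup>* v l" "(open_step \<omega>)\<^sup>*\<^sup>* v (0,0)"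
    using assms by (auto simp: An_def)
  obtain N1 where N1: "\<forall>n\<ge>N1. (open_step (cut (Fb l n) \<omega>))\<^sup>*\<^sup>* v l"
    using rtranclp_open_cut[OF Fb_mono Fb_cover v(1)] by blast
  obtain N2 where N2: "\<forall>n\<ge>N2. (open_step (cut (Fb l n) \<omega>))\<^sup>*\<^sup>* v (0,0)"
    using rtranclp_open_cut[OF Fb_mono Fb_cover v(2)] by blast
  show ?thesis using N1 N2 by (intro exI[of _ "max N1 N2"]) (auto simp: An_def)
qed

lemma De_cut_ev:
  assumes "De \<omega> l \<inter> De \<omega> (0,0) \<noteq> {}"
  shows "\<exists>N. \<forall>n\<ge>N. De (cut (Fb l n) \<omega>) l \<inter> De (cut (Fb l n) \<omega>) (0,0) \<noteq> {}"
proof -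
  obtain v where v: "(open_step \<omega>)\<^sup>*\<^sup>* l v" "(open_step \<omega>)\<^sup>*\<^sup>* (0,0) v"
    using assms by (auto simp: De_def)
  obtain N1 where N1: "\<forall>n\<ge>N1. (open_step (cut (Fb l n) \<omega>))\<^sup>*\<^sup>* l v"
    using rtranclp_open_cut[OF Fb_mono Fb_cover v(1)] by blast
  obtain N2 where N2: "\<forall>n\<ge>N2. (open_step (cut (Fb l n) \<omega>))\<^sup>*\<^sup>* (0,0) v"
    using rtranclp_open_cut[OF Fb_mono Fb_cover v(2)] by blast
  show ?thesis using N1 N2 by (intro exI[of _ "max N1 N2"]) (auto simp: De_def)
qed

lemma Aev_mono: "x \<le> y \<Longrightarrow> An x l \<inter> An x (0,0) \<noteq> {} \<Longrightarrow> An y l \<inter> An y (0,0) \<noteq> {}"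
  using An_mono[of x y l] An_mono[of x y "(0,0)"] by blast

lemma Dev_mono: "x \<le> y \<Longrightarrow> De x l \<inter> De x (0,0) \<noteq> {} \<Longrightarrow> De y l \<inter> De y (0,0) \<noteq> {}"
  using De_mono[of x y l] De_mono[of x y "(0,0)"] by blast

lemma cut_Fb_mono: "n \<le> m \<Longrightarrow> cut (Fb l n) \<omega> \<le> cut (Fb l m) \<omega>"
  using Fb_mono by (intro cut_mono) (simp add: monoD)

theorem mainTheorem4:
  fixes p :: real and l :: node
  assumes "0 \<le> p" and "p \<le> 1"
  defines "\<Sigma> \<equiv> {\<omega> \<in> space (perc p).
              An \<omega> l \<inter> An \<omega> (0, 0) \<noteq> {} \<or> De \<omega> l \<inter> De \<omega> (0, 0) \<noteq> {}}"
  shows "measure (perc p) {\<omega> \<in> space (perc p). An \<omega> l \<inter> An \<omega> (0, 0) \<noteq> {}}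
           \<ge> 1 - sqrt (1 - measure (perc p) \<Sigma>)"
proof -
  interpret P: prob_space "perc p" by (rule prob_space_perc)
  define Aev where "Aev \<omega> \<longleftrightarrow> An \<omega> l \<inter> An \<omega> (0, 0) \<noteq> {}" for \<omega>
  define Dev where "Dev \<omega> \<longleftrightarrow> De \<omega> l \<inter> De \<omega> (0, 0) \<noteq> {}" for \<omega>
  define Q where "Q n = Pi_pmf (Fb l n) False (\<lambda>_. bernoulli_pmf p)" for n
  define As where "As n = {\<omega> \<in> space (perc p). Aev (cut (Fb l n) \<omega>)}" for n
  define Ds where "Ds n = {\<omega> \<in> space (perc p). Dev (cut (Fb l n) \<omega>)}" for n
  define ADs where "ADs n = {\<omega> \<in> space (perc p). Aev (cut (Fb l n) \<omega>) \<and> Dev (cut (Fb l n) \<omega>)}" for n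
  define A where "A = {\<omega> \<in> space (perc p). Aev \<omega>}"
  define D where "D = {\<omega> \<in> space (perc p). Dev \<omega>}"
  note pc = perc_cut[OF Fb_finite Fb_Edges assms(1,2)]
  have AsS: "As n \<in> sets (perc p)" for n unfolding As_def by (rule pc(1))
  have DsS: "Ds n \<in> sets (perc p)" for n unfolding Ds_def by (rule pc(1))
  have ADsS: "ADs n \<in> sets (perc p)" for n unfolding ADs_def by (rule pc(1))
  have AU: "A = (\<Union>n. As n)"
  proof (intro equalityI subsetI)
    fix \<omega> assume w: "\<omega> \<in> A"
    then obtain N where "\<forall>n\<ge>N. Aev (cut (Fb l n) \<omega>)"
      using An_cut_ev unfolding A_def Aev_def by blast
    then have "\<omega> \<in> As N" using w by (auto simp: As_def A_def)
    then show "\<omega> \<in> (\<Union>n. As n)" by blast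
  next
    fix \<omega> assume "\<omega> \<in> (\<Union>n. As n)"
    then obtain n where "\<omega> \<in> As n" by blast
    then show "\<omega> \<in> A" using Aev_mono[OF cut_le, of "Fb l n" \<omega> l]
      by (auto simp: As_def A_def Aev_def)
  qed
  have DU: "D = (\<Union>n. Ds n)"
  proof (intro equalityI subsetI)
    fix \<omega> assume w: "\<omega> \<in> D"
    then obtain N where "\<forall>n\<ge>N. Dev (cut (Fb l n) \<omega>)"
      using De_cut_ev unfolding D_def Dev_def by blast
    then have "\<omega> \<in> Ds N" using w by (auto simp: Ds_def D_def)
    then show "\<omega> \<in> (\<Union>n. Ds n)" by blast
  next
    fix \<omega> assume "\<omega> \<in> (\<Union>n. Ds n)"
    then obtain n where "\<omega> \<in> Ds n" by blast
    then show "\<omega> \<in> D" using Dev_mono[OF cut_le, of "Fb l n" \<omega> l]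
      by (auto simp: Ds_def D_def Dev_def)
  qed
  have ADU: "A \<inter> D = (\<Union>n. ADs n)"
  proof (intro equalityI subsetI)
    fix \<omega> assume "\<omega> \<in> A \<inter> D"
    then have w: "\<omega> \<in> space (perc p)" "Aev \<omega>" "Dev \<omega>" by (auto simp: A_def D_def)
    obtain N1 where "\<forall>n\<ge>N1. Aev (cut (Fb l n) \<omega>)" using An_cut_ev w(2) unfolding Aev_def by blast
    moreover obtain N2 where "\<forall>n\<ge>N2. Dev (cut (Fb l n) \<omega>)" using De_cut_ev w(3) unfolding Dev_def by blast
    ultimately have "\<omega> \<in> ADs (max N1 N2)" using w(1) by (auto simp: ADs_def)
    then show "\<omega> \<in> (\<Union>n. ADs n)" by blast
  next
    fix \<omega> assume "\<omega> \<in> (\<Union>n. ADs n)"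
    then obtain n where "\<omega> \<in> ADs n" by blast
    then show "\<omega> \<in> A \<inter> D"
      using Aev_mono[OF cut_le, of "Fb l n" \<omega> l] Dev_mono[OF cut_le, of "Fb l n" \<omega> l]
      by (auto simp: ADs_def A_def D_def Aev_def Dev_def)
  qed
  have cs: "cut (Fb l n) \<omega> \<le> cut (Fb l (Suc n)) \<omega>" for n \<omega> by (intro cut_Fb_mono) simp
  have AevM: "Aev (cut (Fb l (Suc n)) \<omega>)" if "Aev (cut (Fb l n) \<omega>)" for n \<omega>
    using that unfolding Aev_def by (rule Aev_mono[OF cs])
  have DevM: "Dev (cut (Fb l (Suc n)) \<omega>)" if "Dev (cut (Fb l n) \<omega>)" for n \<omega>
    using that unfolding Dev_def by (rule Dev_mono[OF cs])
  have AevUp: "Aev y" if "x \<le> y" "Aev x" for x y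
    using that unfolding Aev_def by (rule Aev_mono)
  have DevUp: "Dev y" if "x \<le> y" "Dev x" for x y
    using that unfolding Dev_def by (rule Dev_mono)
  have incA: "incseq As"
    by (rule incseq_SucI) (auto simp: As_def intro: AevM)
  have incD: "incseq Ds"
    by (rule incseq_SucI) (auto simp: Ds_def intro: DevM)
  have incAD: "incseq ADs"
    by (rule incseq_SucI) (auto simp: ADs_def intro: AevM DevM)
  have limA: "(\<lambda>n. measure (perc p) (As n)) \<longlonglongrightarrow> measure (perc p) A"
    unfolding AU using AsS incA by (intro P.finite_Lim_measure_incseq) auto
  have limD: "(\<lambda>n. measure (perc p) (Ds n)) \<longlonglongrightarrow> measure (perc p) D"
    unfolding DU using DsS incD by (intro P.finite_Lim_measure_incseq) auto
  have limAD: "(\<lambda>n. measure (perc p) (ADs n)) \<longlonglongrightarrow> measure (perc p) (A \<inter> D)"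
    unfolding ADU using ADsS incAD by (intro P.finite_Lim_measure_incseq) auto
  have mA: "measure (perc p) (As n) = measure_pmf.prob (Q n) {x. Aev x}" for n
    unfolding As_def Q_def by (rule pc(2))
  have mD: "measure (perc p) (Ds n) = measure_pmf.prob (Q n) {x. Dev x}" for n
    unfolding Ds_def Q_def by (rule pc(2))
  have mAD: "measure (perc p) (ADs n) = measure_pmf.prob (Q n) ({x. Aev x} \<inter> {x. Dev x})" for n
    using perc_cut(2)[OF Fb_finite[of l n] Fb_Edges[of l n] assms(1,2), of "\<lambda>x. Aev x \<and> Dev x"] unfolding ADs_def Q_def by (simp add: Collect_conj_eq)
  have eqAD: "measure (perc p) (As n) = measure (perc p) (Ds n)" for n
    unfolding mA mD Q_def Aev_def Dev_def by (rule sym_prob)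
  have harris: "measure (perc p) (As n) * measure (perc p) (As n) \<le> measure (perc p) (ADs n)" for n
  proof -
    have "measure_pmf.prob (Q n) {x. Aev x} * measure_pmf.prob (Q n) {x. Dev x}
        \<le> measure_pmf.prob (Q n) ({x. Aev x} \<inter> {x. Dev x})"
      unfolding Q_def
      by (rule harris_Pi_pmf[OF Fb_finite assms(1,2)])
         (auto intro: AevUp DevUp)
    then show ?thesis using eqAD[of n] mA mD mAD by simp
  qed
  have PAD: "measure (perc p) D = measure (perc p) A"
  proof -
    have "(\<lambda>n. measure (perc p) (As n)) \<longlonglongrightarrow> measure (perc p) D"
      using limD by (simp add: eqAD)
    then show ?thesis using limA by (rule LIMSEQ_unique)
  qed
  have PAD2: "measure (perc p) A * measure (perc p) A \<le> measure (perc p) (A \<inter> D)"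
    by (rule LIMSEQ_le[OF tendsto_mult[OF limA limA] limAD]) (use harris in auto)
  have AS: "A \<in> sets (perc p)" unfolding AU using AsS by auto
  have DS: "D \<in> sets (perc p)" unfolding DU using DsS by auto
  have "\<Sigma> = A \<union> D" by (auto simp: \<Sigma>_def A_def D_def Aev_def Dev_def)
  then have PS: "measure (perc p) \<Sigma> = measure (perc p) A + measure (perc p) D - measure (perc p) (A \<inter> D)"
    using AS DS by (simp add: measure_Un3 P.fmeasurable_eq_sets)
  define a where "a = measure (perc p) A"
  have a1: "a \<le> 1" unfolding a_def by simp
  have key: "(1 - a)\<^sup>2 \<le> 1 - measure (perc p) \<Sigma>"
    using PS PAD PAD2 unfolding a_def[symmetric] by (simp add: power2_eq_square algebra_simps)
  have "1 - a \<le> sqrt (1 - measure (perc p) \<Sigma>)" by (rule real_le_rsqrt[OF key])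
  then show ?thesis unfolding a_def A_def Aev_def by simp
qed


end
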